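(* Let $(Z, S(1), S(0), Y(1), Y(0), \mathbf{X})$ be random variables with $Z\in\{0,1\}$, $S(z)\in\{0,1\}$, $Y(z)$ real-valued, $\mathbf{X}$ a covariate vector, observed $S=S(Z)$, $Y=Y(Z)$, and assume Randomization: $Z \perp\!\!\!\perp \{S(1),S(0),Y(1),Y(0),\mathbf{X}\}$. Assume Monotonicity ($S(1)\ge S(0)$ a.s.) and General Principal Ignorability ($Y(z)\perp\!\!\!\perp U\mid \mathbf{X}$ for $z=0,1$). Then $$E\{\mathbf{X}Y(1)\mid U=s\bar{s}\} = E\{w_{1,s\bar{s}}(\mathbf{X})\mathbf{X}Y\mid Z=1,S=1\},$$ $$E\{\mathbf{X}Y(0)\mid U=s\bar{s}\} = E\{w_{0,s\bar{s}}(\mathbf{X})\mathbf{X}Y\mid Z=0,S=0\},$$ $$E(\mathbf{X}\mathbf{X}^\top\mid U=s\bar{s}) = E\{w_{1,s\bar{s}}(\mathbf{X})\mathbf{X}\mathbf{X}^\top\mid Z=1,S=1\} = E\{w_{0,s\bar{s}}(\mathbf{X})\mathbf{X}\mathbf{X}^\top\mid Z=0,S=0\},$$ where $w_{1,s\bar{s}}(\mathbf{X}) = \frac{e_{s\bar{s}}(\mathbf{X})}{e_{s\bar{s}}(\mathbf{X})+e_{ss}(\mathbf{X})}\Big/\frac{\pi_{s\bar{s}}}{\pi_{s\bar{s}}+\pi_{ss}}$ and $w_{0,s\bar{s}}(\mathbf{X}) = \frac{e_{s\bar{s}}(\mathbf{X})}{e_{s\bar{s}}(\mathbf{X})+e_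{\bar{s}\bar{s}}(\mathbf{X})}\Big/\frac{\pi_{s\bar{s}}}{\pi_{s\bar{s}}+\pi_{\bar{s}\bar{s}}}$.
   Context: The principal stratum is $U=(S(1),S(0))$, whose values $(1,1),(1,0),(0,1),(0,0)$ are labelled $ss, s\bar{s}, \bar{s}s, \bar{s}\bar{s}$. Principal scores: $e_u(\mathbf{X}) = \Pr(U=u\mid \mathbf{X})$; proportions $\pi_u=\Pr(U=u)$. All expectations are assumed to exist and all conditioning events and denominators to be positive. *)

theory Defs
  imports "HOL-Probability.Probability"
begin

definition sigmaX :: "'a measure \<Rightarrow> ('a \<Rightarrow> 'b::topological_space) \<Rightarrow> 'a measure" where
  "sigmaX M X = vimage_algebra (space M) X borel"

definition pscore :: "'a measure \<Rightarrow> ('a \<Rightarrow> 'b::topological_space) \<Rightarrow> ('a \<Rightarrow> 'u) \<Rightarrow> 'u \<Rightarrow> 'a \<Rightarrow> real" where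
  "pscore M X U u = real_cond_exp M (sigmaX M X) (indicator {\<omega> \<in> space M. U \<omega> = u})"

definition cond_indep_given ::
  "'a measure \<Rightarrow> ('a \<Rightarrow> real) \<Rightarrow> ('a \<Rightarrow> 'u) \<Rightarrow> ('a \<Rightarrow> 'b::topological_space) \<Rightarrow> bool" where
  "cond_indep_given M Y U X \<longleftrightarrow>
     (\<forall>A \<in> sets borel. \<forall>B. AE \<omega> in M.
        real_cond_exp M (sigmaX M X)
          (\<lambda>\<eta>. indicator {\<xi> \<in> space M. Y \<xi> \<in> A} \<eta> * indicator {\<xi> \<in> space M. U \<xi> \<in> B} \<eta>) \<omega>
        = real_cond_exp M (sigmaX M X) (indicator {\<xi> \<in> space M. Y \<xi> \<in> A}) \<omega>
          * real_cond_exp M (sigmaX M X) (indicator {\<xi> \<in> space M. U \<xi> \<in> B}) \<omega>)"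

definition cexp_event :: "'a measure \<Rightarrow> ('a \<Rightarrow> 'b::{banach, second_countable_topology}) \<Rightarrow> 'a set \<Rightarrow> 'b" where
  "cexp_event M f A = (1 / measure M A) *\<^sub>R (\<integral>\<omega>. indicator A \<omega> *\<^sub>R f \<omega> \<partial>M)"

definition outer :: "real ^ 'n \<Rightarrow> real ^ 'n ^ 'n" where
  "outer x = (\<chi> i j. x $ i * x $ j)"

definition indep_rv :: "'a measure \<Rightarrow> 'b measure \<Rightarrow> ('a \<Rightarrow> 'b) \<Rightarrow> 'c measure \<Rightarrow> ('a \<Rightarrow> 'c) \<Rightarrow> bool" where
  "indep_rv M Ma A Mb B \<longleftrightarrow>
     (\<forall>Sa \<in> sets Ma. \<forall>Sb \<in> sets Mb.
        measure M {\<omega> \<in> space M. A \<omega> \<in> Sa \<and> B \<omega> \<in> Sb}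
        = measure M {\<omega> \<in> space M. A \<omega> \<in> Sa} * measure M {\<omega> \<in> space M. B \<omega> \<in> Sb})"

end

theory Submission
  imports Defs
begin

lemma sfs_sigmaX:
  assumes "prob_space M" "X \<in> borel_measurable M"
  shows "sigma_finite_subalgebra M (sigmaX M X)"
proof -
  interpret prob_space M by fact
  have sub: "subalgebra M (sigmaX M X)"
    unfolding subalgebra_def sigmaX_def
  proof
    show "space (vimage_algebra (space M) X borel) = space M" by simp
    have "X \<in> space M \<rightarrow> space borel" by simp
    then show "sets (vimage_algebra (space M) X borel) \<subseteq> sets M"
      using assms(2) by (auto simp: sets_vimage_algebra2 measurable_sets)
  qed
  interpret finite_measure_subalgebra M "sigmaX M X"
    by unfold_locales (rule sub)
  show ?thesis by unfold_locales
qed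

lemma sigmaX_meas: "X \<in> borel_measurable (sigmaX M X)"
  unfolding sigmaX_def by (rule measurable_vimage_algebra1) simp

lemma sigmaX_sets: "sets (sigmaX M X) = {X -` A \<inter> space M | A. A \<in> sets borel}"
  unfolding sigmaX_def by (rule sets_vimage_algebra2) simp

lemma space_sigmaX[simp]: "space (sigmaX M X) = space M"
  unfolding sigmaX_def by simp

lemma id_meas_sub:
  assumes "sets N \<subseteq> sets M" "space N = space M"
  shows "(\<lambda>x. x) \<in> measurable (density M f) N"
  using assms sets.sets_into_space[of _ N]
  by (auto simp: measurable_def Int_absorb2)

lemma rand_lemma:
  fixes H :: "'a \<Rightarrow> 'b::{banach, second_countable_topology}"
  assumes "prob_space M" and Zs: "Zs \<in> sets M"
   and W: "W \<in> measurable M N"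
   and ind: "\<And>C. C \<in> sets N \<Longrightarrow> measure M (Zs \<inter> (W -` C \<inter> space M)) = measure M Zs * measure M (W -` C \<inter> space M)"
   and H: "H \<in> borel_measurable (vimage_algebra (space M) W N)"
  shows "(\<integral>\<omega>. indicator Zs \<omega> *\<^sub>R H \<omega> \<partial>M) = measure M Zs *\<^sub>R (\<integral>\<omega>. H \<omega> \<partial>M)"
proof -
  interpret prob_space M by fact
  let ?S = "vimage_algebra (space M) W N"
  have WS: "W \<in> space M \<rightarrow> space N" using W by (auto simp: measurable_def)
  have sub: "sets ?S \<subseteq> sets M"
    using W WS by (auto simp: sets_vimage_algebra2 measurable_sets)
  have subalg: "subalgebra M ?S" using sub by (simp add: subalgebra_def)
  have Hm: "H \<in> borel_measurable M" by (rule measurable_from_subalg[OF subalg H])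
  let ?p = "measure M Zs"
  define f1 where "f1 = (\<lambda>x. indicator Zs x :: real)"
  define f2 where "f2 = (\<lambda>x::'a. ?p)"
  have f1m: "f1 \<in> borel_measurable M" using Zs unfolding f1_def by simp
  have f2m: "f2 \<in> borel_measurable M" unfolding f2_def by simp
  have id1: "(\<lambda>x. x) \<in> measurable (density M f1) ?S" by (rule id_meas_sub) (use sub in auto)
  have id2: "(\<lambda>x. x) \<in> measurable (density M f2) ?S" by (rule id_meas_sub) (use sub in auto)
  have eq: "distr (density M f1) ?S (\<lambda>x. x) = distr (density M f2) ?S (\<lambda>x. x)"
  proof (rule measure_eqI)
    show "sets (distr (density M f1) ?S (\<lambda>x. x)) = sets (distr (density M f2) ?S (\<lambda>x. x))" by simp
    fix C assume "C \<in> sets (distr (density M f1) ?S (\<lambda>x. x))"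
    then have CS: "C \<in> sets ?S" by simp
    then obtain D where D: "D \<in> sets N" "C = W -` D \<inter> space M"
      using WS by (auto simp: sets_vimage_algebra2)
    have CM: "C \<in> sets M" using CS sub by auto
    have Csp: "C \<subseteq> space M" using CM sets.sets_into_space by auto
    have "emeasure (distr (density M f1) ?S (\<lambda>x. x)) C = emeasure (density M f1) C"
      using id1 CS Csp by (simp add: emeasure_distr Int_absorb2)
    also have "\<dots> = (\<integral>\<^sup>+ x. ennreal (f1 x) * indicator C x \<partial>M)"
      using f1m CM by (simp add: emeasure_density)
    also have "\<dots> = (\<integral>\<^sup>+ x. indicator (Zs \<inter> C) x \<partial>M)"
      by (rule nn_integral_cong) (auto simp: f1_def split: split_indicator)
    also have "\<dots> = emeasure M (Zs \<inter> C)" using Zs CM by simp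
    also have "\<dots> = ennreal (?p * measure M C)"
      using ind[OF D(1)] D(2) by (simp add: emeasure_eq_measure)
    also have "\<dots> = (\<integral>\<^sup>+ x. ennreal (f2 x) * indicator C x \<partial>M)"
      using CM by (simp add: f2_def nn_integral_cmult_indicator emeasure_eq_measure ennreal_mult)
    also have "\<dots> = emeasure (density M f2) C"
      using f2m CM by (simp add: emeasure_density)
    also have "\<dots> = emeasure (distr (density M f2) ?S (\<lambda>x. x)) C"
      using id2 CS Csp by (simp add: emeasure_distr Int_absorb2)
    finally show "emeasure (distr (density M f1) ?S (\<lambda>x. x)) C = emeasure (distr (density M f2) ?S (\<lambda>x. x)) C" .
  qed
  have "(\<integral>\<omega>. indicator Zs \<omega> *\<^sub>R H \<omega> \<partial>M) = (\<integral>\<omega>. f1 \<omega> *\<^sub>R H \<omega> \<partial>M)" by (simp add: f1_def)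
  also have "\<dots> = integral\<^sup>L (density M f1) H"
    by (rule integral_density[symmetric]) (use Hm f1m in \<open>auto simp: f1_def\<close>)
  also have "\<dots> = integral\<^sup>L (distr (density M f1) ?S (\<lambda>x. x)) H"
    using integral_distr[OF id1 H] by simp
  also have "\<dots> = integral\<^sup>L (distr (density M f2) ?S (\<lambda>x. x)) H" by (simp add: eq)
  also have "\<dots> = integral\<^sup>L (density M f2) H"
    using integral_distr[OF id2 H] by simp
  also have "\<dots> = (\<integral>\<omega>. f2 \<omega> *\<^sub>R H \<omega> \<partial>M)"
    by (rule integral_density) (use Hm f2m in \<open>auto simp: f2_def\<close>)
  also have "\<dots> = ?p *\<^sub>R (\<integral>\<omega>. H \<omega> \<partial>M)" by (simp add: f2_def)
  finally show ?thesis .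
qed

definition CIgen :: "'a measure \<Rightarrow> ('a \<Rightarrow> 'c::topological_space) \<Rightarrow> ('a \<Rightarrow> real) \<Rightarrow> 'a set set" where
  "CIgen M X Y = {D \<inter> {\<omega>\<in>space M. Y \<omega> \<in> A} | D A. D \<in> sets (sigmaX M X) \<and> A \<in> sets borel}"

lemma sigmaX_sub:
  assumes "prob_space M" "X \<in> borel_measurable M"
  shows "sets (sigmaX M X) \<subseteq> sets M"
  using sigma_finite_subalgebra.subalg[OF sfs_sigmaX[OF assms]] by (simp add: subalgebra_def)

lemma CIgen_sub:
  assumes "prob_space M" "X \<in> borel_measurable M" "Y \<in> borel_measurable M"
  shows "CIgen M X Y \<subseteq> sets M"
proof
  fix C assume "C \<in> CIgen M X Y"
  then obtain D A where DA: "C = D \<inter> {\<omega>\<in>space M. Y \<omega> \<in> A}" "D \<in> sets (sigmaX M X)" "A \<in> sets borel"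
    unfolding CIgen_def by blast
  have "D \<in> sets M" using sigmaX_sub[OF assms(1,2)] DA(2) by blast
  moreover have "{\<omega>\<in>space M. Y \<omega> \<in> A} \<in> sets M"
    using measurable_sets[OF assms(3) DA(3)] by (simp add: vimage_def Int_def conj_commute)
  ultimately show "C \<in> sets M" using DA(1) by (simp add: sets.Int)
qed

lemma CIgen_pow: "CIgen M X Y \<subseteq> Pow (space M)"
  unfolding CIgen_def by auto

lemma sets_CIsig: "sets (sigma (space M) (CIgen M X Y)) = sigma_sets (space M) (CIgen M X Y)"
  using CIgen_pow by (rule sets_measure_of)

lemma space_CIsig[simp]: "space (sigma (space M) (CIgen M X Y)) = space M"
  using CIgen_pow by (rule space_measure_of)

lemma CIsig_sub:
  assumes "prob_space M" "X \<in> borel_measurable M" "Y \<in> borel_measurable M"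
  shows "sets (sigma (space M) (CIgen M X Y)) \<subseteq> sets M"
  unfolding sets_CIsig using CIgen_sub[OF assms] by (rule sets.sigma_sets_subset)

lemma sigmaX_sub_CIsig:
  "sets (sigmaX M X) \<subseteq> sets (sigma (space M) (CIgen M X Y))"
proof
  fix D assume D: "D \<in> sets (sigmaX M X)"
  then have "D \<subseteq> space M" using sets.sets_into_space[OF D] by simp
  then have "D = D \<inter> {\<omega>\<in>space M. Y \<omega> \<in> UNIV}" by auto
  moreover have "(UNIV::real set) \<in> sets borel" by simp
  ultimately have "D \<in> CIgen M X Y" unfolding CIgen_def using D by blast
  then show "D \<in> sets (sigma (space M) (CIgen M X Y))" unfolding sets_CIsig by (rule sigma_sets.Basic)
qed

lemma Y_meas_CIsig:
  "Y \<in> borel_measurable (sigma (space M) (CIgen M X Y))"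
proof (rule measurableI)
  fix A :: "real set" assume A: "A \<in> sets borel"
  have "space M \<in> sets (sigmaX M X)" using sets.top[of "sigmaX M X"] by simp
  then have "space M \<inter> {\<omega>\<in>space M. Y \<omega> \<in> A} \<in> CIgen M X Y" unfolding CIgen_def using A by (intro CollectI exI conjI) (rule refl)
  moreover have "Y -` A \<inter> space (sigma (space M) (CIgen M X Y)) = space M \<inter> {\<omega>\<in>space M. Y \<omega> \<in> A}" by auto
  ultimately show "Y -` A \<inter> space (sigma (space M) (CIgen M X Y)) \<in> sets (sigma (space M) (CIgen M X Y))"
    unfolding sets_CIsig by (simp add: sigma_sets.Basic)
qed simp

lemma sigmaX_meas_CIsig:
  assumes "f \<in> measurable (sigmaX M X) N"
  shows "f \<in> measurable (sigma (space M) (CIgen M X Y)) N"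
  by (rule measurable_from_subalg[OF _ assms]) (use sigmaX_sub_CIsig in \<open>auto simp: subalgebra_def\<close>)

lemma CI_rect:
  assumes P: "prob_space M" and Xm: "X \<in> borel_measurable M" and Ym: "Y \<in> borel_measurable M"
   and ci: "cond_indep_given M Y U X"
   and Bs: "{\<omega>\<in>space M. U \<omega> \<in> B} \<in> sets M"
   and D: "D \<in> sets (sigmaX M X)" and A: "A \<in> sets borel"
  shows "measure M ({\<omega>\<in>space M. U \<omega> \<in> B} \<inter> (D \<inter> {\<omega>\<in>space M. Y \<omega> \<in> A}))
     = (\<integral>\<omega>. real_cond_exp M (sigmaX M X) (indicator {\<omega>\<in>space M. U \<omega> \<in> B}) \<omega> * indicator (D \<inter> {\<omega>\<in>space M. Y \<omega> \<in> A}) \<omega> \<partial>M)"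
proof -
  interpret prob_space M by fact
  interpret sfs: sigma_finite_subalgebra M "sigmaX M X" by (rule sfs_sigmaX[OF P Xm])
  let ?Bs = "{\<omega>\<in>space M. U \<omega> \<in> B}"
  let ?Ya = "{\<omega>\<in>space M. Y \<omega> \<in> A}"
  let ?F = "sigmaX M X"
  let ?eB = "real_cond_exp M ?F (indicator ?Bs)"
  have YaM: "?Ya \<in> sets M"
    using measurable_sets[OF Ym A] by (simp add: vimage_def Int_def conj_commute)
  have DM: "D \<in> sets M" using sigmaX_sub[OF P Xm] D by blast
  have iDF: "(indicator D :: 'a \<Rightarrow> real) \<in> borel_measurable ?F" using D by simp
  have ci1: "AE \<omega> in M. real_cond_exp M ?F (\<lambda>\<eta>. indicator ?Ya \<eta> * indicator ?Bs \<eta>) \<omega>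
        = real_cond_exp M ?F (indicator ?Ya) \<omega> * ?eB \<omega>"
    using ci A unfolding cond_indep_given_def by blast
  have eBint: "integrable M ?eB"
    by (intro sfs.real_cond_exp_int(1) integrable_const_bound[where B=1]) (use Bs in auto)
  have "measure M (?Bs \<inter> (D \<inter> ?Ya)) = (\<integral>\<omega>. indicator D \<omega> * (indicator ?Ya \<omega> * indicator ?Bs \<omega>) \<partial>M)"
  proof -
    have "(\<integral>\<omega>. indicator D \<omega> * (indicator ?Ya \<omega> * indicator ?Bs \<omega>) \<partial>M) = (\<integral>\<omega>. (indicator (?Bs \<inter> (D \<inter> ?Ya)) \<omega> :: real) \<partial>M)"
      by (rule Bochner_Integration.integral_cong) (auto split: split_indicator)
    also have "\<dots> = measure M (?Bs \<inter> (D \<inter> ?Ya))" using Bs DM YaM by simp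
    finally show ?thesis by simp
  qed
  also have "\<dots> = (\<integral>\<omega>. indicator D \<omega> * real_cond_exp M ?F (\<lambda>\<eta>. indicator ?Ya \<eta> * indicator ?Bs \<eta>) \<omega> \<partial>M)"
    by (rule sfs.real_cond_exp_intg(2)[symmetric])
       (use iDF Bs YaM DM in \<open>auto intro!: integrable_const_bound[where B=1] split: split_indicator\<close>)
  also have "\<dots> = (\<integral>\<omega>. (indicator D \<omega> * ?eB \<omega>) * real_cond_exp M ?F (indicator ?Ya) \<omega> \<partial>M)"
    by (rule integral_cong_AE) (use ci1 iDF DM in auto)
  also have "\<dots> = (\<integral>\<omega>. (indicator D \<omega> * ?eB \<omega>) * indicator ?Ya \<omega> \<partial>M)"
  proof (rule sfs.real_cond_exp_intg(2))
    show "integrable M (\<lambda>x. indicator D x * ?eB x * indicator ?Ya x)"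
      by (rule Bochner_Integration.integrable_bound[OF eBint]) (use DM YaM in \<open>auto split: split_indicator\<close>)
    show "(\<lambda>x. indicator D x * ?eB x) \<in> borel_measurable ?F" using iDF by measurable
    show "(indicator ?Ya :: 'a \<Rightarrow> real) \<in> borel_measurable M" using YaM by simp
  qed
  also have "\<dots> = (\<integral>\<omega>. ?eB \<omega> * indicator (D \<inter> ?Ya) \<omega> \<partial>M)"
    by (rule Bochner_Integration.integral_cong) (auto split: split_indicator)
  finally show ?thesis .
qed

lemma CI_lemma:
  fixes F :: "'a \<Rightarrow> 'b::{banach, second_countable_topology}"
  assumes P: "prob_space M" and Xm: "X \<in> borel_measurable M" and Ym: "Y \<in> borel_measurable M"
   and ci: "cond_indep_given M Y U X"
   and Bs: "{\<omega>\<in>space M. U \<omega> \<in> B} \<in> sets M"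
   and Fm: "F \<in> borel_measurable (sigma (space M) (CIgen M X Y))"
  shows "(\<integral>\<omega>. indicator {\<omega>\<in>space M. U \<omega> \<in> B} \<omega> *\<^sub>R F \<omega> \<partial>M)
       = (\<integral>\<omega>. real_cond_exp M (sigmaX M X) (indicator {\<omega>\<in>space M. U \<omega> \<in> B}) \<omega> *\<^sub>R F \<omega> \<partial>M)"
proof -
  interpret prob_space M by fact
  interpret sfs: sigma_finite_subalgebra M "sigmaX M X" by (rule sfs_sigmaX[OF P Xm])
  let ?Bs = "{\<omega>\<in>space M. U \<omega> \<in> B}"
  let ?F = "sigmaX M X"
  let ?eB = "real_cond_exp M ?F (indicator ?Bs)"
  let ?S = "sigma (space M) (CIgen M X Y)"
  have sub: "sets ?S \<subseteq> sets M" by (rule CIsig_sub[OF P Xm Ym])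
  have subalg: "subalgebra M ?S" using sub by (simp add: subalgebra_def)
  have FmM: "F \<in> borel_measurable M" by (rule measurable_from_subalg[OF subalg Fm])
  have eBint: "integrable M ?eB"
    by (intro sfs.real_cond_exp_int(1) integrable_const_bound[where B=1]) (use Bs in auto)
  have eBpos: "AE x in M. 0 \<le> ?eB x"
    by (rule sfs.real_cond_exp_pos) (use Bs in auto)
  define f1 where "f1 = (\<lambda>x. indicator ?Bs x :: real)"
  define f2 where "f2 = ?eB"
  have f1m: "f1 \<in> borel_measurable M" using Bs unfolding f1_def by simp
  have f2m: "f2 \<in> borel_measurable M" unfolding f2_def by simp
  have id1: "(\<lambda>x. x) \<in> measurable (density M f1) ?S" by (rule id_meas_sub) (use sub in auto)
  have id2: "(\<lambda>x. x) \<in> measurable (density M f2) ?S" by (rule id_meas_sub) (use sub in auto)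
  have em1: "emeasure (distr (density M f1) ?S (\<lambda>x. x)) C = ennreal (measure M (?Bs \<inter> C))"
    if CS: "C \<in> sets ?S" for C
  proof -
    have CM: "C \<in> sets M" using CS sub by auto
    have Csp: "C \<subseteq> space M" using CM sets.sets_into_space by auto
    have "emeasure (distr (density M f1) ?S (\<lambda>x. x)) C = emeasure (density M f1) C"
      using id1 CS Csp by (simp add: emeasure_distr Int_absorb2)
    also have "\<dots> = (\<integral>\<^sup>+ x. ennreal (f1 x) * indicator C x \<partial>M)"
      using f1m CM by (simp add: emeasure_density)
    also have "\<dots> = (\<integral>\<^sup>+ x. indicator (?Bs \<inter> C) x \<partial>M)"
      by (rule nn_integral_cong) (auto simp: f1_def split: split_indicator)
    also have "\<dots> = emeasure M (?Bs \<inter> C)" using Bs CM by simp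
    also have "\<dots> = ennreal (measure M (?Bs \<inter> C))" by (simp add: emeasure_eq_measure)
    finally show ?thesis .
  qed
  have em2: "emeasure (distr (density M f2) ?S (\<lambda>x. x)) C = ennreal (\<integral>\<omega>. ?eB \<omega> * indicator C \<omega> \<partial>M)"
    if CS: "C \<in> sets ?S" for C
  proof -
    have CM: "C \<in> sets M" using CS sub by auto
    have Csp: "C \<subseteq> space M" using CM sets.sets_into_space by auto
    have "emeasure (distr (density M f2) ?S (\<lambda>x. x)) C = emeasure (density M f2) C"
      using id2 CS Csp by (simp add: emeasure_distr Int_absorb2)
    also have "\<dots> = (\<integral>\<^sup>+ x. ennreal (f2 x) * indicator C x \<partial>M)"
      using f2m CM by (simp add: emeasure_density)
    also have "\<dots> = (\<integral>\<^sup>+ x. ennreal (?eB x * indicator C x) \<partial>M)"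
      by (rule nn_integral_cong) (auto simp: f2_def split: split_indicator)
    also have "\<dots> = ennreal (\<integral>\<omega>. ?eB \<omega> * indicator C \<omega> \<partial>M)"
    proof (rule nn_integral_eq_integral)
      show "integrable M (\<lambda>x. ?eB x * indicator C x)"
        by (rule Bochner_Integration.integrable_bound[OF eBint]) (use CM in \<open>auto split: split_indicator\<close>)
      show "AE x in M. 0 \<le> ?eB x * indicator C x" using eBpos by eventually_elim auto
    qed
    finally show ?thesis .
  qed
  have eq: "distr (density M f1) ?S (\<lambda>x. x) = distr (density M f2) ?S (\<lambda>x. x)"
  proof (rule measure_eqI_generator_eq[where E="CIgen M X Y" and \<Omega>="space M" and A="\<lambda>_. space M"])
    show "Int_stable (CIgen M X Y)"
    proof (rule Int_stableI)
      fix a b assume "a \<in> CIgen M X Y" "b \<in> CIgen M X Y"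
      then obtain D1 A1 D2 A2 where ab: "a = D1 \<inter> {\<omega>\<in>space M. Y \<omega> \<in> A1}" "D1 \<in> sets ?F" "A1 \<in> sets borel"
         "b = D2 \<inter> {\<omega>\<in>space M. Y \<omega> \<in> A2}" "D2 \<in> sets ?F" "A2 \<in> sets borel"
        unfolding CIgen_def by blast
      have "a \<inter> b = (D1 \<inter> D2) \<inter> {\<omega>\<in>space M. Y \<omega> \<in> A1 \<inter> A2}" using ab by auto
      moreover have "D1 \<inter> D2 \<in> sets ?F" using ab by auto
      moreover have "A1 \<inter> A2 \<in> sets borel" using ab by auto
      ultimately show "a \<inter> b \<in> CIgen M X Y" unfolding CIgen_def by blast
    qed
    show "CIgen M X Y \<subseteq> Pow (space M)" by (rule CIgen_pow)
    show "sets (distr (density M f1) ?S (\<lambda>x. x)) = sigma_sets (space M) (CIgen M X Y)"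
      by (simp add: sets_CIsig)
    show "sets (distr (density M f2) ?S (\<lambda>x. x)) = sigma_sets (space M) (CIgen M X Y)"
      by (simp add: sets_CIsig)
    have spG: "space M \<in> CIgen M X Y"
    proof -
      have "space M \<in> sets ?F" using sets.top[of ?F] by simp
      moreover have "(UNIV::real set) \<in> sets borel" by simp
      moreover have "space M = space M \<inter> {\<omega>\<in>space M. Y \<omega> \<in> UNIV}" by auto
      ultimately show ?thesis unfolding CIgen_def by blast
    qed
    show "range (\<lambda>_. space M) \<subseteq> CIgen M X Y" using spG by auto
    show "(\<Union>i::nat. space M) = space M" by simp
    have "space M \<in> sets ?S" using sets.top[of ?S] by simp
    then show "\<And>i::nat. emeasure (distr (density M f1) ?S (\<lambda>x. x)) (space M) \<noteq> \<infinity>"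
      using em1 by simp
    fix C assume "C \<in> CIgen M X Y"
    then obtain D A where DA: "C = D \<inter> {\<omega>\<in>space M. Y \<omega> \<in> A}" "D \<in> sets ?F" "A \<in> sets borel"
      unfolding CIgen_def by blast
    have CS: "C \<in> sets ?S" unfolding sets_CIsig using \<open>C \<in> CIgen M X Y\<close> by (rule sigma_sets.Basic)
    show "emeasure (distr (density M f1) ?S (\<lambda>x. x)) C = emeasure (distr (density M f2) ?S (\<lambda>x. x)) C"
      using em1[OF CS] em2[OF CS] CI_rect[OF P Xm Ym ci Bs DA(2,3)] DA(1) by simp
  qed
  have "(\<integral>\<omega>. indicator ?Bs \<omega> *\<^sub>R F \<omega> \<partial>M) = (\<integral>\<omega>. f1 \<omega> *\<^sub>R F \<omega> \<partial>M)" by (simp add: f1_def)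
  also have "\<dots> = integral\<^sup>L (density M f1) F"
    by (rule integral_density[symmetric]) (use FmM f1m in \<open>auto simp: f1_def\<close>)
  also have "\<dots> = integral\<^sup>L (distr (density M f1) ?S (\<lambda>x. x)) F"
    using integral_distr[OF id1 Fm] by simp
  also have "\<dots> = integral\<^sup>L (distr (density M f2) ?S (\<lambda>x. x)) F" by (simp add: eq)
  also have "\<dots> = integral\<^sup>L (density M f2) F"
    using integral_distr[OF id2 Fm] by simp
  also have "\<dots> = (\<integral>\<omega>. f2 \<omega> *\<^sub>R F \<omega> \<partial>M)"
    by (rule integral_density) (use FmM f2m eBpos in \<open>auto simp: f2_def\<close>)
  finally show ?thesis by (simp add: f2_def)
qed

lemma sigmaX_sub_vimage:
  assumes "X \<in> borel_measurable (vimage_algebra (space M) W N)"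
  shows "subalgebra (vimage_algebra (space M) W N) (sigmaX M X)"
  unfolding subalgebra_def
proof
  show "space (sigmaX M X) = space (vimage_algebra (space M) W N)" by simp
  show "sets (sigmaX M X) \<subseteq> sets (vimage_algebra (space M) W N)"
  proof
    fix D assume "D \<in> sets (sigmaX M X)"
    then obtain A where A: "D = X -` A \<inter> space M" "A \<in> sets borel" unfolding sigmaX_sets by blast
    show "D \<in> sets (vimage_algebra (space M) W N)"
      using measurable_sets[OF assms A(2)] A(1) by simp
  qed
qed

lemma alg_w: "s > 0 \<Longrightarrow> p > 0 \<Longrightarrow> q \<ge> 0 \<Longrightarrow> s * ((e/s)/(p/(p+q))) = ((p+q)/p) * (e::real)"
  by (simp add: field_simps)

lemma chain:
  fixes G :: "'a \<Rightarrow> 'b::{banach, second_countable_topology}" and X :: "'a \<Rightarrow> 'c::topological_space"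
  assumes P: "prob_space M" and Xm: "X \<in> borel_measurable M" and Ym: "Yz \<in> borel_measurable M"
   and ci: "cond_indep_given M Yz U X"
   and T_def: "T = {\<omega>\<in>space M. U \<omega> \<in> BT}" and O_def: "Ot = {\<omega>\<in>space M. U \<omega> \<in> BO}"
   and BTO: "BT \<inter> BO = {}"
   and TM: "T \<in> sets M" and OM: "Ot \<in> sets M"
   and Es_def: "Es = {\<omega>\<in>space M. U \<omega> \<in> BT \<union> BO}"
   and Wm: "W \<in> measurable M N" and Zs: "Zs \<in> sets M"
   and ind: "\<And>C. C \<in> sets N \<Longrightarrow> measure M (Zs \<inter> (W -` C \<inter> space M)) = measure M Zs * measure M (W -` C \<inter> space M)"
   and XS: "X \<in> borel_measurable (vimage_algebra (space M) W N)"
   and EsS: "Es \<in> sets (vimage_algebra (space M) W N)"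
   and GS: "G \<in> borel_measurable (vimage_algebra (space M) W N)"
   and GC: "G \<in> borel_measurable (sigma (space M) (CIgen M X Yz))"
   and posT: "measure M T > 0"
   and posZE: "measure M (Zs \<inter> Es) > 0"
   and eT_def: "eT = real_cond_exp M (sigmaX M X) (indicator T)"
   and eO_def: "eO = real_cond_exp M (sigmaX M X) (indicator Ot)"
   and posden: "AE \<omega> in M. eT \<omega> + eO \<omega> > 0"
   and w_def: "w = (\<lambda>\<omega>. (eT \<omega> / (eT \<omega> + eO \<omega>)) / (measure M T / (measure M T + measure M Ot)))"
  shows "(1 / measure M (Zs \<inter> Es)) *\<^sub>R (\<integral>\<omega>. indicator (Zs \<inter> Es) \<omega> *\<^sub>R (w \<omega> *\<^sub>R G \<omega>) \<partial>M)
       = (1 / measure M T) *\<^sub>R (\<integral>\<omega>. indicator T \<omega> *\<^sub>R G \<omega> \<partial>M)"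
proof -
  interpret prob_space M by fact
  interpret sfs: sigma_finite_subalgebra M "sigmaX M X" by (rule sfs_sigmaX[OF P Xm])
  let ?S = "vimage_algebra (space M) W N"
  let ?C = "sigma (space M) (CIgen M X Yz)"
  let ?eE = "real_cond_exp M (sigmaX M X) (indicator Es)"
  let ?pT = "measure M T" and ?pO = "measure M Ot" and ?pZ = "measure M Zs"
  have WS: "W \<in> space M \<rightarrow> space N" using Wm by (auto simp: measurable_def)
  have subS: "sets ?S \<subseteq> sets M"
    using Wm WS by (auto simp: sets_vimage_algebra2 measurable_sets)
  have subalgS: "subalgebra M ?S" using subS by (simp add: subalgebra_def)
  have subalgC: "subalgebra M ?C" using CIsig_sub[OF P Xm Ym] by (simp add: subalgebra_def)
  have GM: "G \<in> borel_measurable M" by (rule measurable_from_subalg[OF subalgC GC])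
  have EsM: "Es \<in> sets M" using EsS subS by blast
  have eTF: "eT \<in> borel_measurable (sigmaX M X)" unfolding eT_def by simp
  have eOF: "eO \<in> borel_measurable (sigmaX M X)" unfolding eO_def by simp
  have wF: "w \<in> borel_measurable (sigmaX M X)" unfolding w_def using eTF eOF by measurable
  have wS: "w \<in> borel_measurable ?S" by (rule measurable_from_subalg[OF sigmaX_sub_vimage[OF XS] wF])
  have wC: "w \<in> borel_measurable ?C" by (rule sigmaX_meas_CIsig[OF wF])
  have wM: "w \<in> borel_measurable M" by (rule measurable_from_subalg[OF subalgC wC])
  have eTM: "eT \<in> borel_measurable M" unfolding eT_def by simp
  have eOM: "eO \<in> borel_measurable M" unfolding eO_def by simp
  have "(\<integral>\<omega>. indicator (Zs \<inter> Es) \<omega> *\<^sub>R (w \<omega> *\<^sub>R G \<omega>) \<partial>M)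
      = (\<integral>\<omega>. indicator Zs \<omega> *\<^sub>R (indicator Es \<omega> *\<^sub>R (w \<omega> *\<^sub>R G \<omega>)) \<partial>M)"
    by (rule Bochner_Integration.integral_cong) (auto split: split_indicator)
  also have "\<dots> = ?pZ *\<^sub>R (\<integral>\<omega>. indicator Es \<omega> *\<^sub>R (w \<omega> *\<^sub>R G \<omega>) \<partial>M)"
  proof (rule rand_lemma[OF P Zs Wm ind])
    show "(\<lambda>\<omega>. indicator Es \<omega> *\<^sub>R (w \<omega> *\<^sub>R G \<omega>)) \<in> borel_measurable ?S"
      using EsS wS GS by measurable
  qed
  also have "(\<integral>\<omega>. indicator Es \<omega> *\<^sub>R (w \<omega> *\<^sub>R G \<omega>) \<partial>M) = (\<integral>\<omega>. ?eE \<omega> *\<^sub>R (w \<omega> *\<^sub>R G \<omega>) \<partial>M)"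
  proof -
    have "(\<lambda>\<omega>. w \<omega> *\<^sub>R G \<omega>) \<in> borel_measurable ?C" using wC GC by measurable
    from CI_lemma[OF P Xm Ym ci _ this, of "BT \<union> BO"] EsM show ?thesis
      unfolding Es_def by simp
  qed
  also have "\<dots> = (\<integral>\<omega>. ((?pT + ?pO) / ?pT) *\<^sub>R (eT \<omega> *\<^sub>R G \<omega>) \<partial>M)"
  proof (rule integral_cong_AE)
    show "(\<lambda>\<omega>. ?eE \<omega> *\<^sub>R (w \<omega> *\<^sub>R G \<omega>)) \<in> borel_measurable M" using wM GM by measurable
    show "(\<lambda>\<omega>. ((?pT + ?pO) / ?pT) *\<^sub>R (eT \<omega> *\<^sub>R G \<omega>)) \<in> borel_measurable M" using eTM GM by measurable
    have ind_eq: "indicator Es = (\<lambda>\<omega>. indicator T \<omega> + indicator Ot \<omega> :: real)"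
      using BTO unfolding Es_def T_def O_def by (intro ext) (auto split: split_indicator)
    have "AE \<omega> in M. ?eE \<omega> = eT \<omega> + eO \<omega>"
      unfolding ind_eq eT_def eO_def
      by (rule sfs.real_cond_exp_add) (use TM OM in \<open>auto intro!: integrable_const_bound[where B=1]\<close>)
    then show "AE \<omega> in M. ?eE \<omega> *\<^sub>R (w \<omega> *\<^sub>R G \<omega>) = ((?pT + ?pO) / ?pT) *\<^sub>R (eT \<omega> *\<^sub>R G \<omega>)"
      using posden
    proof eventually_elim
      case (elim \<omega>)
      have "?eE \<omega> * w \<omega> = ((?pT + ?pO) / ?pT) * eT \<omega>"
        using elim posT alg_w[of "eT \<omega> + eO \<omega>" ?pT ?pO "eT \<omega>"] unfolding w_def by simp
      then show ?case by (simp add: scaleR_scaleR)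
    qed
  qed
  also have "\<dots> = ((?pT + ?pO) / ?pT) *\<^sub>R (\<integral>\<omega>. eT \<omega> *\<^sub>R G \<omega> \<partial>M)"
    by (rule integral_scaleR_right)
  also have "(\<integral>\<omega>. eT \<omega> *\<^sub>R G \<omega> \<partial>M) = (\<integral>\<omega>. indicator T \<omega> *\<^sub>R G \<omega> \<partial>M)"
    using CI_lemma[OF P Xm Ym ci _ GC, of BT] TM unfolding T_def eT_def by simp
  finally have main: "(\<integral>\<omega>. indicator (Zs \<inter> Es) \<omega> *\<^sub>R (w \<omega> *\<^sub>R G \<omega>) \<partial>M)
      = (?pZ * ((?pT + ?pO) / ?pT)) *\<^sub>R (\<integral>\<omega>. indicator T \<omega> *\<^sub>R G \<omega> \<partial>M)" by simp
  have "Es \<in> sets ?S" by fact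
  then obtain C where C: "C \<in> sets N" "Es = W -` C \<inter> space M" using WS by (auto simp: sets_vimage_algebra2)
  have pZE: "measure M (Zs \<inter> Es) = ?pZ * measure M Es" using ind[OF C(1)] C(2) by simp
  have "Es = T \<union> Ot" unfolding Es_def T_def O_def by auto
  moreover have "T \<inter> Ot = {}" using BTO unfolding T_def O_def by auto
  ultimately have pE: "measure M Es = ?pT + ?pO" using TM OM by (simp add: measure_Union)
  have pZpos: "?pZ > 0" using posZE pZE by (metis measure_nonneg mult_eq_0_iff order_less_le)
  have pOnn: "?pO \<ge> 0" by simp
  have nz: "?pO * ?pZ + ?pT * ?pZ \<noteq> 0" using pZpos posT pOnn
    by (metis add_nonneg_pos mult_nonneg_nonneg mult_pos_pos less_le measure_nonneg)
  show ?thesis unfolding main pZE pE using pZpos posT pOnn nz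
    by (simp add: scaleR_scaleR field_simps)
qed

theorem corollary4:
  fixes M :: "'a measure"
    and Z S1 S0 :: "'a \<Rightarrow> bool"
    and Y1 Y0 :: "'a \<Rightarrow> real"
    and X :: "'a \<Rightarrow> real ^ 'n"
  defines "U \<equiv> (\<lambda>\<omega>. (S1 \<omega>, S0 \<omega>))"
    and "S \<equiv> (\<lambda>\<omega>. if Z \<omega> then S1 \<omega> else S0 \<omega>)"
    and "Y \<equiv> (\<lambda>\<omega>. if Z \<omega> then Y1 \<omega> else Y0 \<omega>)"
  defines "Ev u \<equiv> {\<omega> \<in> space M. U \<omega> = u}"
  defines "e u \<equiv> pscore M X U u"
    and "\<pi> u \<equiv> measure M (Ev u)"
  defines "w1 \<equiv> (\<lambda>\<omega>. (e (True, False) \<omega> / (e (True, False) \<omega> + e (True, True) \<omega>))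
                     / (\<pi> (True, False) / (\<pi> (True, False) + \<pi> (True, True))))"
    and "w0 \<equiv> (\<lambda>\<omega>. (e (True, False) \<omega> / (e (True, False) \<omega> + e (False, False) \<omega>))
                     / (\<pi> (True, False) / (\<pi> (True, False) + \<pi> (False, False))))"
  defines "A11 \<equiv> {\<omega> \<in> space M. Z \<omega> \<and> S \<omega>}"
    and "A00 \<equiv> {\<omega> \<in> space M. \<not> Z \<omega> \<and> \<not> S \<omega>}"
  assumes prob: "prob_space M"
    and meas_Z: "Z \<in> measurable M (count_space UNIV)"
    and meas_S1: "S1 \<in> measurable M (count_space UNIV)"
    and meas_S0: "S0 \<in> measurable M (count_space UNIV)"
    and meas_Y1: "Y1 \<in> borel_measurable M"
    and meas_Y0: "Y0 \<in> borel_measurable M"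
    and meas_X: "X \<in> borel_measurable M"
    and randomization: "indep_rv M (count_space UNIV) Z
          (count_space UNIV \<Otimes>\<^sub>M count_space UNIV \<Otimes>\<^sub>M borel \<Otimes>\<^sub>M borel \<Otimes>\<^sub>M borel)
          (\<lambda>\<omega>. (S1 \<omega>, S0 \<omega>, Y1 \<omega>, Y0 \<omega>, X \<omega>))"
    and monotonicity: "AE \<omega> in M. S0 \<omega> \<longrightarrow> S1 \<omega>"
    and ignorability1: "cond_indep_given M Y1 U X"
    and ignorability0: "cond_indep_given M Y0 U X"
    and pos_ev: "\<pi> (True, False) > 0"
    and pos_A11: "measure M A11 > 0"
    and pos_A00: "measure M A00 > 0"
    and pos_den1: "AE \<omega> in M. e (True, False) \<omega> + e (True, True) \<omega> > 0"
    and pos_den0: "AE \<omega> in M. e (True, False) \<omega> + e (False, False) \<omega> > 0"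
    and int_XY1: "integrable M (\<lambda>\<omega>. Y1 \<omega> *\<^sub>R X \<omega>)"
    and int_XY0: "integrable M (\<lambda>\<omega>. Y0 \<omega> *\<^sub>R X \<omega>)"
    and int_XX: "integrable M (\<lambda>\<omega>. outer (X \<omega>))"
    and int_wXY1: "integrable M (\<lambda>\<omega>. indicator A11 \<omega> *\<^sub>R (w1 \<omega> * Y \<omega>) *\<^sub>R X \<omega>)"
    and int_wXY0: "integrable M (\<lambda>\<omega>. indicator A00 \<omega> *\<^sub>R (w0 \<omega> * Y \<omega>) *\<^sub>R X \<omega>)"
    and int_wXX1: "integrable M (\<lambda>\<omega>. indicator A11 \<omega> *\<^sub>R w1 \<omega> *\<^sub>R outer (X \<omega>))"
    and int_wXX0: "integrable M (\<lambda>\<omega>. indicator A00 \<omega> *\<^sub>R w0 \<omega> *\<^sub>R outer (X \<omega>))"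
  shows "cexp_event M (\<lambda>\<omega>. Y1 \<omega> *\<^sub>R X \<omega>) (Ev (True, False))
           = cexp_event M (\<lambda>\<omega>. (w1 \<omega> * Y \<omega>) *\<^sub>R X \<omega>) A11
       \<and> cexp_event M (\<lambda>\<omega>. Y0 \<omega> *\<^sub>R X \<omega>) (Ev (True, False))
           = cexp_event M (\<lambda>\<omega>. (w0 \<omega> * Y \<omega>) *\<^sub>R X \<omega>) A00
       \<and> cexp_event M (\<lambda>\<omega>. outer (X \<omega>)) (Ev (True, False))
           = cexp_event M (\<lambda>\<omega>. w1 \<omega> *\<^sub>R outer (X \<omega>)) A11
       \<and> cexp_event M (\<lambda>\<omega>. w1 \<omega> *\<^sub>R outer (X \<omega>)) A11
           = cexp_event M (\<lambda>\<omega>. w0 \<omega> *\<^sub>R outer (X \<omega>)) A00"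
proof -
  note [measurable] = meas_Z meas_S1 meas_S0 meas_Y1 meas_Y0 meas_X
  interpret prob_space M by (rule prob)
  define N where "N = ((count_space UNIV :: bool measure) \<Otimes>\<^sub>M (count_space UNIV :: bool measure) \<Otimes>\<^sub>M (borel :: real measure) \<Otimes>\<^sub>M (borel :: real measure) \<Otimes>\<^sub>M (borel :: (real^'n) measure))"
  define W where "W = (\<lambda>\<omega>. (S1 \<omega>, S0 \<omega>, Y1 \<omega>, Y0 \<omega>, X \<omega>))"
  let ?S = "vimage_algebra (space M) W N"
  have WM: "W \<in> measurable M N" unfolding W_def N_def by measurable
  have WS: "W \<in> space M \<rightarrow> space N" using WM by (auto simp: measurable_def)
  have WSig: "W \<in> measurable ?S N" by (rule measurable_vimage_algebra1[OF WS])
  have "(\<lambda>\<omega>. snd (snd (snd (snd (W \<omega>))))) \<in> borel_measurable ?S" using WSig unfolding N_def by measurable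
  then have XS: "X \<in> borel_measurable ?S" by (simp add: W_def)
  have "(\<lambda>\<omega>. fst (snd (snd (W \<omega>)))) \<in> borel_measurable ?S" using WSig unfolding N_def by measurable
  then have Y1S: "Y1 \<in> borel_measurable ?S" by (simp add: W_def)
  have "(\<lambda>\<omega>. fst (snd (snd (snd (W \<omega>))))) \<in> borel_measurable ?S" using WSig unfolding N_def by measurable
  then have Y0S: "Y0 \<in> borel_measurable ?S" by (simp add: W_def)
  have "(\<lambda>\<omega>. fst (W \<omega>)) \<in> measurable ?S (count_space UNIV)" using WSig unfolding N_def by measurable
  then have S1S: "S1 \<in> measurable ?S (count_space UNIV)" by (simp add: W_def)
  have "(\<lambda>\<omega>. fst (snd (W \<omega>))) \<in> measurable ?S (count_space UNIV)" using WSig unfolding N_def by measurable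
  then have S0S: "S0 \<in> measurable ?S (count_space UNIV)" by (simp add: W_def)
  have outer_m: "outer \<in> borel_measurable borel"
    unfolding outer_def by (intro borel_measurable_continuous_onI continuous_intros)
  have EvM: "Ev u \<in> sets M" for u
  proof -
    obtain a b where u: "u = (a, b)" by (cases u)
    have "{\<omega>\<in>space M. S1 \<omega> = a \<and> S0 \<omega> = b} \<in> sets M" by measurable
    then show ?thesis by (simp add: Ev_def U_def u)
  qed
  define Zs1 where "Zs1 = {\<omega>\<in>space M. Z \<omega>}"
  define Zs0 where "Zs0 = {\<omega>\<in>space M. \<not> Z \<omega>}"
  define Es1 where "Es1 = {\<omega>\<in>space M. U \<omega> \<in> {(True, False)} \<union> {(True, True)}}"
  define Es0 where "Es0 = {\<omega>\<in>space M. U \<omega> \<in> {(True, False)} \<union> {(False, False)}}"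
  have Zs1M: "Zs1 \<in> sets M" unfolding Zs1_def by measurable
  have Zs0M: "Zs0 \<in> sets M" unfolding Zs0_def by measurable
  have "{\<omega>\<in>space ?S. S1 \<omega>} \<in> sets ?S" using S1S by measurable
  then have Es1S: "Es1 \<in> sets ?S" unfolding Es1_def U_def by (auto elim!: back_subst[where P="\<lambda>x. x \<in> sets ?S"])
  have "{\<omega>\<in>space ?S. \<not> S0 \<omega>} \<in> sets ?S" using S0S by measurable
  then have Es0S: "Es0 \<in> sets ?S" unfolding Es0_def U_def by (auto elim!: back_subst[where P="\<lambda>x. x \<in> sets ?S"])
  have ind1: "measure M (Zs1 \<inter> (W -` C \<inter> space M)) = measure M Zs1 * measure M (W -` C \<inter> space M)"
    if "C \<in> sets N" for C
  proof -
    have "measure M {\<omega> \<in> space M. Z \<omega> \<in> {True} \<and> W \<omega> \<in> C}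
        = measure M {\<omega> \<in> space M. Z \<omega> \<in> {True}} * measure M {\<omega> \<in> space M. W \<omega> \<in> C}"
      using randomization[unfolded indep_rv_def, rule_format, of "{True}" C] that unfolding N_def W_def by simp
    moreover have "{\<omega> \<in> space M. Z \<omega> \<in> {True} \<and> W \<omega> \<in> C} = Zs1 \<inter> (W -` C \<inter> space M)"
      unfolding Zs1_def by auto
    moreover have "{\<omega> \<in> space M. Z \<omega> \<in> {True}} = Zs1" unfolding Zs1_def by auto
    moreover have "{\<omega> \<in> space M. W \<omega> \<in> C} = W -` C \<inter> space M" by auto
    ultimately show ?thesis by simp
  qed
  have ind0: "measure M (Zs0 \<inter> (W -` C \<inter> space M)) = measure M Zs0 * measure M (W -` C \<inter> space M)"
    if "C \<in> sets N" for C
  proof -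
    have "measure M {\<omega> \<in> space M. Z \<omega> \<in> {False} \<and> W \<omega> \<in> C}
        = measure M {\<omega> \<in> space M. Z \<omega> \<in> {False}} * measure M {\<omega> \<in> space M. W \<omega> \<in> C}"
      using randomization[unfolded indep_rv_def, rule_format, of "{False}" C] that unfolding N_def W_def by simp
    moreover have "{\<omega> \<in> space M. Z \<omega> \<in> {False} \<and> W \<omega> \<in> C} = Zs0 \<inter> (W -` C \<inter> space M)"
      unfolding Zs0_def by auto
    moreover have "{\<omega> \<in> space M. Z \<omega> \<in> {False}} = Zs0" unfolding Zs0_def by auto
    moreover have "{\<omega> \<in> space M. W \<omega> \<in> C} = W -` C \<inter> space M" by auto
    ultimately show ?thesis by simp
  qed
  have A11eq: "A11 = Zs1 \<inter> Es1" unfolding A11_def Zs1_def Es1_def S_def U_def by auto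
  have A00eq: "A00 = Zs0 \<inter> Es0" unfolding A00_def Zs0_def Es0_def S_def U_def by auto
  have T_def: "Ev (True, False) = {\<omega>\<in>space M. U \<omega> \<in> {(True, False)}}" unfolding Ev_def by auto
  have O1_def: "Ev (True, True) = {\<omega>\<in>space M. U \<omega> \<in> {(True, True)}}" unfolding Ev_def by auto
  have O0_def: "Ev (False, False) = {\<omega>\<in>space M. U \<omega> \<in> {(False, False)}}" unfolding Ev_def by auto
  have eu: "e u = real_cond_exp M (sigmaX M X) (indicator (Ev u))" for u
    unfolding e_def pscore_def Ev_def by simp
  have w1_eq: "w1 = (\<lambda>\<omega>. (e (True, False) \<omega> / (e (True, False) \<omega> + e (True, True) \<omega>))
       / (measure M (Ev (True, False)) / (measure M (Ev (True, False)) + measure M (Ev (True, True)))))"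
    unfolding w1_def \<pi>_def by simp
  have w0_eq: "w0 = (\<lambda>\<omega>. (e (True, False) \<omega> / (e (True, False) \<omega> + e (False, False) \<omega>))
       / (measure M (Ev (True, False)) / (measure M (Ev (True, False)) + measure M (Ev (False, False)))))"
    unfolding w0_def \<pi>_def by simp
  have posT: "measure M (Ev (True, False)) > 0" using pos_ev unfolding \<pi>_def .
  have XC1: "X \<in> borel_measurable (sigma (space M) (CIgen M X Y1))" by (rule sigmaX_meas_CIsig[OF sigmaX_meas])
  have XC0: "X \<in> borel_measurable (sigma (space M) (CIgen M X Y0))" by (rule sigmaX_meas_CIsig[OF sigmaX_meas])
  have Y1C: "Y1 \<in> borel_measurable (sigma (space M) (CIgen M X Y1))" by (rule Y_meas_CIsig)
  have Y0C: "Y0 \<in> borel_measurable (sigma (space M) (CIgen M X Y0))" by (rule Y_meas_CIsig)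
  have chain1: "(1 / measure M (Zs1 \<inter> Es1)) *\<^sub>R (\<integral>\<omega>. indicator (Zs1 \<inter> Es1) \<omega> *\<^sub>R (w1 \<omega> *\<^sub>R G \<omega>) \<partial>M)
       = (1 / measure M (Ev (True, False))) *\<^sub>R (\<integral>\<omega>. indicator (Ev (True, False)) \<omega> *\<^sub>R G \<omega> \<partial>M)"
    if GS: "G \<in> borel_measurable ?S" and GC: "G \<in> borel_measurable (sigma (space M) (CIgen M X Y1))"
    for G :: "'a \<Rightarrow> 'vv::{banach, second_countable_topology}"
    by (rule chain[OF prob meas_X meas_Y1 ignorability1 T_def O1_def _ EvM EvM Es1_def WM Zs1M ind1 XS Es1S GS GC
          posT _ eu eu pos_den1 w1_eq]) (use pos_A11 A11eq in auto)
  have chain0: "(1 / measure M (Zs0 \<inter> Es0)) *\<^sub>R (\<integral>\<omega>. indicator (Zs0 \<inter> Es0) \<omega> *\<^sub>R (w0 \<omega> *\<^sub>R G \<omega>) \<partial>M)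
       = (1 / measure M (Ev (True, False))) *\<^sub>R (\<integral>\<omega>. indicator (Ev (True, False)) \<omega> *\<^sub>R G \<omega> \<partial>M)"
    if GS: "G \<in> borel_measurable ?S" and GC: "G \<in> borel_measurable (sigma (space M) (CIgen M X Y0))"
    for G :: "'a \<Rightarrow> 'vv::{banach, second_countable_topology}"
    by (rule chain[OF prob meas_X meas_Y0 ignorability0 T_def O0_def _ EvM EvM Es0_def WM Zs0M ind0 XS Es0S GS GC
          posT _ eu eu pos_den0 w0_eq]) (use pos_A00 A00eq in auto)
  have c1: "cexp_event M (\<lambda>\<omega>. Y1 \<omega> *\<^sub>R X \<omega>) (Ev (True, False))
           = cexp_event M (\<lambda>\<omega>. (w1 \<omega> * Y \<omega>) *\<^sub>R X \<omega>) A11"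
  proof -
    have "(\<integral>\<omega>. indicator A11 \<omega> *\<^sub>R ((w1 \<omega> * Y \<omega>) *\<^sub>R X \<omega>) \<partial>M)
        = (\<integral>\<omega>. indicator (Zs1 \<inter> Es1) \<omega> *\<^sub>R (w1 \<omega> *\<^sub>R (Y1 \<omega> *\<^sub>R X \<omega>)) \<partial>M)"
      by (rule Bochner_Integration.integral_cong) (simp_all add: A11eq[symmetric] A11_def Y_def split: split_indicator)
    moreover have "(1 / measure M (Zs1 \<inter> Es1)) *\<^sub>R (\<integral>\<omega>. indicator (Zs1 \<inter> Es1) \<omega> *\<^sub>R (w1 \<omega> *\<^sub>R (Y1 \<omega> *\<^sub>R X \<omega>)) \<partial>M)
       = (1 / measure M (Ev (True, False))) *\<^sub>R (\<integral>\<omega>. indicator (Ev (True, False)) \<omega> *\<^sub>R (Y1 \<omega> *\<^sub>R X \<omega>) \<partial>M)"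
      by (rule chain1; rule borel_measurable_scaleR) (fact Y1S XS Y1C XC1)+
    ultimately show ?thesis unfolding cexp_event_def A11eq by simp
  qed
  have c2: "cexp_event M (\<lambda>\<omega>. Y0 \<omega> *\<^sub>R X \<omega>) (Ev (True, False))
           = cexp_event M (\<lambda>\<omega>. (w0 \<omega> * Y \<omega>) *\<^sub>R X \<omega>) A00"
  proof -
    have "(\<integral>\<omega>. indicator A00 \<omega> *\<^sub>R ((w0 \<omega> * Y \<omega>) *\<^sub>R X \<omega>) \<partial>M)
        = (\<integral>\<omega>. indicator (Zs0 \<inter> Es0) \<omega> *\<^sub>R (w0 \<omega> *\<^sub>R (Y0 \<omega> *\<^sub>R X \<omega>)) \<partial>M)"
      by (rule Bochner_Integration.integral_cong) (simp_all add: A00eq[symmetric] A00_def Y_def split: split_indicator)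
    moreover have "(1 / measure M (Zs0 \<inter> Es0)) *\<^sub>R (\<integral>\<omega>. indicator (Zs0 \<inter> Es0) \<omega> *\<^sub>R (w0 \<omega> *\<^sub>R (Y0 \<omega> *\<^sub>R X \<omega>)) \<partial>M)
       = (1 / measure M (Ev (True, False))) *\<^sub>R (\<integral>\<omega>. indicator (Ev (True, False)) \<omega> *\<^sub>R (Y0 \<omega> *\<^sub>R X \<omega>) \<partial>M)"
      by (rule chain0; rule borel_measurable_scaleR) (fact Y0S XS Y0C XC0)+
    ultimately show ?thesis unfolding cexp_event_def A00eq by simp
  qed
  have c3: "cexp_event M (\<lambda>\<omega>. outer (X \<omega>)) (Ev (True, False))
           = cexp_event M (\<lambda>\<omega>. w1 \<omega> *\<^sub>R outer (X \<omega>)) A11"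
    unfolding cexp_event_def A11eq
    by (rule chain1[symmetric]; rule measurable_compose[OF _ outer_m]) (fact XS XC1)+
  have c4: "cexp_event M (\<lambda>\<omega>. outer (X \<omega>)) (Ev (True, False))
           = cexp_event M (\<lambda>\<omega>. w0 \<omega> *\<^sub>R outer (X \<omega>)) A00"
    unfolding cexp_event_def A00eq
    by (rule chain0[symmetric]; rule measurable_compose[OF _ outer_m]) (fact XS XC0)+
  show ?thesis using c1 c2 c3 c4 by simp
qed

end
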